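(* For all real $s,t\in(0,\infty)$, every integer $n\ge 2$ and every $\sigma\in(0,2]$, $$n\,t^{n+\sigma}-(n+\sigma)\,t^n s^{\sigma}+\sigma\, s^{n+\sigma}\ \ge\ \sigma\, s^{n+\sigma-2}(t-s)^2 .$$ *)

theory Defs
  imports Complex_Main
begin

end

theory Submission
  imports Defs "HOL-Analysis.Analysis"
begin

theorem lemma2p2:
  fixes s t \<sigma> :: real and n :: nat
  assumes "s > 0" and "t > 0" and "n \<ge> 2" and "0 < \<sigma>" and "\<sigma> \<le> 2"
  shows "real n * t powr (real n + \<sigma>) - (real n + \<sigma>) * t powr (real n) * s powr \<sigma>
           + \<sigma> * s powr (real n + \<sigma>)
         \<ge> \<sigma> * s powr (real n + \<sigma> - 2) * (t - s)^2"
proof -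
  define p where "p = real n - 1 + \<sigma>"
  have p1: "p \<ge> 1" using assms by (simp add: p_def)
  have Y1: "(t powr p) powr ((real n - 1)/p) * (s powr p) powr (\<sigma>/p)
      \<le> ((real n - 1)/p) * t powr p + (\<sigma>/p) * s powr p"
  proof (rule Youngs_inequality_0)
    have "(real n - 1)/p + \<sigma>/p = (real n - 1 + \<sigma>)/p" by (simp add: add_divide_distrib)
    also have "\<dots> = 1" using p1 by (simp add: p_def)
    finally show "(real n - 1)/p + \<sigma>/p = 1" .
  qed (use assms p1 in auto)
  have Y2: "(t powr p) powr (1/p) * (s powr p) powr ((p-1)/p)
      \<le> (1/p) * t powr p + ((p-1)/p) * s powr p"
    by (rule Youngs_inequality_0) (use assms p1 in \<open>auto simp: field_simps\<close>)
  have e1: "(t powr p) powr ((real n - 1)/p) = t powr (real n - 1)"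
    using p1 by (simp add: powr_powr)
  have e2: "(s powr p) powr (\<sigma>/p) = s powr \<sigma>"
    using p1 by (simp add: powr_powr)
  have e3: "(t powr p) powr (1/p) = t"
    using p1 assms by (simp add: powr_powr)
  have e4: "(s powr p) powr ((p-1)/p) = s powr (p-1)"
    using p1 by (simp add: powr_powr)
  have A: "t powr (real n - 1) * s powr \<sigma> \<le> ((real n - 1)/p) * t powr p + (\<sigma>/p) * s powr p"
    using Y1 e1 e2 by simp
  have B: "t * s powr (p-1) \<le> (1/p) * t powr p + ((p-1)/p) * s powr p"
    using Y2 e3 e4 by simp
  have A': "p * (t powr (real n - 1) * s powr \<sigma>) \<le> (real n - 1) * t powr p + \<sigma> * s powr p"
    using A p1 by (simp add: field_simps)
  have B': "p * (t * s powr (p-1)) \<le> t powr p + (p-1) * s powr p"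
    using B p1 by (simp add: field_simps)
  have C: "p * ((real n + \<sigma>) * (t powr (real n - 1) * s powr \<sigma>) + \<sigma> * (t * s powr (p-1)))
      \<le> p * (real n * t powr p + 2 * \<sigma> * s powr p)"
  proof -
    have "p * ((real n + \<sigma>) * (t powr (real n - 1) * s powr \<sigma>) + \<sigma> * (t * s powr (p-1)))
        = (real n + \<sigma>) * (p * (t powr (real n - 1) * s powr \<sigma>)) + \<sigma> * (p * (t * s powr (p-1)))"
      by (simp add: algebra_simps)
    also have "\<dots> \<le> (real n + \<sigma>) * ((real n - 1) * t powr p + \<sigma> * s powr p)
                 + \<sigma> * (t powr p + (p-1) * s powr p)"
      using A' B' assms by (intro add_mono mult_left_mono) auto
    also have "\<dots> = p * (real n * t powr p + 2 * \<sigma> * s powr p)"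
      by (simp add: p_def algebra_simps)
    finally show ?thesis .
  qed
  have D: "(real n + \<sigma>) * (t powr (real n - 1) * s powr \<sigma>) + \<sigma> * (t * s powr (p-1))
      \<le> real n * t powr p + 2 * \<sigma> * s powr p"
    using C p1 by (simp add: mult_le_cancel_left)
  have D2: "(real n + \<sigma>) * (t powr (real n - 1) * s powr \<sigma>) * t + \<sigma> * (t * s powr (p-1)) * t
      \<le> real n * t powr p * t + 2 * \<sigma> * s powr p * t"
    using mult_right_mono[OF D, of t] assms by (simp add: algebra_simps)
  have f1: "t powr (real n - 1) * t = t powr real n"
  proof -
    have "t powr (real n - 1) * t = t powr (real n - 1) * t powr 1" using assms by simp
    also have "\<dots> = t powr (real n - 1 + 1)" by (rule powr_add[symmetric])
    finally show ?thesis by simp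
  qed
  have f2: "t powr p * t = t powr (real n + \<sigma>)"
  proof -
    have "t powr p * t = t powr p * t powr 1" using assms by simp
    also have "\<dots> = t powr (p + 1)" by (rule powr_add[symmetric])
    finally show ?thesis by (simp add: p_def)
  qed
  have f3: "s powr (p-1) = s powr (real n + \<sigma> - 2)"
    by (simp add: p_def algebra_simps)
  have f4: "s powr p = s powr (real n + \<sigma> - 2) * s"
  proof -
    have "s powr (real n + \<sigma> - 2) * s = s powr (real n + \<sigma> - 2) * s powr 1" using assms by simp
    also have "\<dots> = s powr (real n + \<sigma> - 2 + 1)" by (rule powr_add[symmetric])
    finally show ?thesis by (simp add: p_def algebra_simps)
  qed
  have f5: "s powr (real n + \<sigma>) = s powr (real n + \<sigma> - 2) * s * s"
  proof -
    have "s powr (real n + \<sigma> - 2) * s * s = s powr (real n + \<sigma> - 2) * s powr 1 * s powr 1" using assms by simp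
    also have "\<dots> = s powr (real n + \<sigma> - 2 + 1 + 1)" by (simp only: powr_add)
    finally show ?thesis by simp
  qed
  have L: "(real n + \<sigma>) * (t powr (real n - 1) * s powr \<sigma>) * t + \<sigma> * (t * s powr (p-1)) * t
      = (real n + \<sigma>) * (t powr real n * s powr \<sigma>) + \<sigma> * s powr (real n + \<sigma> - 2) * t^2"
  proof -
    have "(real n + \<sigma>) * (t powr (real n - 1) * s powr \<sigma>) * t = (real n + \<sigma>) * ((t powr (real n - 1) * t) * s powr \<sigma>)"
      by (simp only: mult_ac)
    also have "\<dots> = (real n + \<sigma>) * (t powr real n * s powr \<sigma>)" by (simp only: f1)
    finally have a: "(real n + \<sigma>) * (t powr (real n - 1) * s powr \<sigma>) * t = (real n + \<sigma>) * (t powr real n * s powr \<sigma>)" .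
    have b: "\<sigma> * (t * s powr (p-1)) * t = \<sigma> * s powr (real n + \<sigma> - 2) * t^2"
      unfolding f3 by (simp add: power2_eq_square mult_ac)
    show ?thesis unfolding a b ..
  qed
  have R: "real n * t powr p * t + 2 * \<sigma> * s powr p * t
      = real n * t powr (real n + \<sigma>) + 2 * \<sigma> * s powr (real n + \<sigma> - 2) * s * t"
  proof -
    have "real n * t powr p * t = real n * (t powr p * t)" by (simp only: mult_ac)
    moreover have "2 * \<sigma> * s powr p * t = 2 * \<sigma> * s powr (real n + \<sigma> - 2) * s * t"
      unfolding f4 by (simp only: mult_ac)
    ultimately show ?thesis by (simp only: f2)
  qed
  have Q: "\<sigma> * s powr (real n + \<sigma> - 2) * (t - s)^2 = \<sigma> * s powr (real n + \<sigma> - 2) * t^2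
      - 2 * \<sigma> * s powr (real n + \<sigma> - 2) * s * t + \<sigma> * (s powr (real n + \<sigma> - 2) * s * s)"
    by (simp add: power2_eq_square algebra_simps)
  have M: "(real n + \<sigma>) * t powr (real n) * s powr \<sigma> = (real n + \<sigma>) * (t powr real n * s powr \<sigma>)"
    by (simp only: mult_ac)
  show ?thesis using D2 unfolding L R Q M f5 by linarith
qed

end
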